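(* Assume $\alpha=\beta\ge2$ and let $(U,V,\Lambda)$ be the similarity profile. Then for every $\tau\ge0$ and all measurable $\rho,\zeta:\mathbb R\to(0,\infty)$ for which $\mathcal I_\Lambda(\rho,\zeta)$ is finite, $$\mathcal I_\Lambda(\rho,\zeta)-e^\tau\mathcal D_{\mathrm{react}}(\rho,\zeta)\le K_2\,e^{-\tau/(\alpha-1)},\qquad K_2:=\frac{\tilde c_\alpha}{k^{1/(\alpha-1)}}\int_{\mathbb R}\Big|\frac{\alpha\Lambda(y)}{U(y)}\Big|^{\alpha/(\alpha-1)}\mathrm dy,$$ with $\tilde c_\alpha=\big(\tfrac{2}{\alpha^2}\big)^{1/(\alpha-1)}\tfrac{\alpha-1}{\alpha}$.
   Context: Fix $d_1,d_2,k>0$, real stoichiometric coefficients $\alpha,\beta\ge1$ and $A_-,A_+>0$. The similarity profile is a triple $(U,V,\Lambda)$ with $U,V\in\mathrm C^2(\mathbb R)$ positive, bounded and bounded away from $0$, $\Lambda:\mathbb R\to\mathbb R$, satisfying $d_1U''+\tfrac y2U'+\alpha\Lambda=0$, $d_2V''+\tfrac y2V'-\beta\Lambda=0$, $U^\alpha=V^\beta$ on $\mathbb R$, and $U(\pm\infty)=A_\pm^\beta$, $V(\pm\infty)=A_\pm^\alpha$. $\Gamma(a,b)=(a-b)(\log a-\log b)$ for $a,b>0$, $\Gamma(0,0)=0$, $\Gamma(0,c)=\Gamma(c,0)=\infty$ for $c>0$. Reactive dissipation $\mathcal D_{\mathrm{react}}(\rho,\zeta)=\int_{\mathbb R}kU^\alpha\,\Gamma(\rho^\alpha,\zeta^\beta)\,\mathrm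 dy$. Mixed term $\mathcal I_\Lambda(\rho,\zeta)=\int_{\mathbb R}\big((1-\rho)\alpha-(1-\zeta)\beta\big)\Lambda\,\mathrm dy$. *)

theory Defs
  imports "HOL-Analysis.Analysis"
begin

definition C2 :: "(real \<Rightarrow> real) \<Rightarrow> bool" where
  "C2 f \<longleftrightarrow> (\<exists>f' f''. (\<forall>y. (f has_real_derivative f' y) (at y)) \<and>
      (\<forall>y. (f' has_real_derivative f'' y) (at y)) \<and> continuous_on UNIV f'')"

definition similarity_profile ::
  "real \<Rightarrow> real \<Rightarrow> real \<Rightarrow> real \<Rightarrow> real \<Rightarrow> real \<Rightarrow>
   (real \<Rightarrow> real) \<Rightarrow> (real \<Rightarrow> real) \<Rightarrow> (real \<Rightarrow> real) \<Rightarrow> bool" where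
  "similarity_profile d1 d2 \<alpha> \<beta> Am Ap U V \<Lambda> \<longleftrightarrow>
     C2 U \<and> C2 V \<and>
     (\<forall>y. U y > 0 \<and> V y > 0) \<and>
     bounded (range U) \<and> bounded (range V) \<and>
     (\<exists>c>0. \<forall>y. c \<le> U y \<and> c \<le> V y) \<and>
     (\<forall>y. d1 * deriv (deriv U) y + y / 2 * deriv U y + \<alpha> * \<Lambda> y = 0) \<and>
     (\<forall>y. d2 * deriv (deriv V) y + y / 2 * deriv V y - \<beta> * \<Lambda> y = 0) \<and>
     (\<forall>y. U y powr \<alpha> = V y powr \<beta>) \<and>
     (U \<longlongrightarrow> Ap powr \<beta>) at_top \<and> (U \<longlongrightarrow> Am powr \<beta>) at_bot \<and>
     (V \<longlongrightarrow> Ap powr \<alpha>) at_top \<and> (V \<longlongrightarrow> Am powr \<alpha>) at_bot"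

text \<open>Gamma(a,b) = (a-b)(log a - log b), extended by Gamma(0,0)=0 and infinity otherwise
  (values for negative arguments are irrelevant here and set to infinity).\<close>
definition Gam :: "real \<Rightarrow> real \<Rightarrow> ennreal" where
  "Gam a b = (if a > 0 \<and> b > 0 then ennreal ((a - b) * (ln a - ln b))
              else if a = 0 \<and> b = 0 then 0 else \<infinity>)"

definition D_react ::
  "real \<Rightarrow> real \<Rightarrow> real \<Rightarrow> (real \<Rightarrow> real) \<Rightarrow> (real \<Rightarrow> real) \<Rightarrow> (real \<Rightarrow> real) \<Rightarrow> ennreal" where
  "D_react k \<alpha> \<beta> U \<rho> \<zeta> =
     (\<integral>\<^sup>+ y. ennreal (k * U y powr \<alpha>) * Gam (\<rho> y powr \<alpha>) (\<zeta> y powr \<beta>) \<partial>lborel)"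

definition I_Lambda_integrand ::
  "real \<Rightarrow> real \<Rightarrow> (real \<Rightarrow> real) \<Rightarrow> (real \<Rightarrow> real) \<Rightarrow> (real \<Rightarrow> real) \<Rightarrow> real \<Rightarrow> real" where
  "I_Lambda_integrand \<alpha> \<beta> \<Lambda> \<rho> \<zeta> y = ((1 - \<rho> y) * \<alpha> - (1 - \<zeta> y) * \<beta>) * \<Lambda> y"

definition I_Lambda ::
  "real \<Rightarrow> real \<Rightarrow> (real \<Rightarrow> real) \<Rightarrow> (real \<Rightarrow> real) \<Rightarrow> (real \<Rightarrow> real) \<Rightarrow> real" where
  "I_Lambda \<alpha> \<beta> \<Lambda> \<rho> \<zeta> = (\<integral>y. I_Lambda_integrand \<alpha> \<beta> \<Lambda> \<rho> \<zeta> y \<partial>lborel)"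

definition c_tilde :: "real \<Rightarrow> real" where
  "c_tilde \<alpha> = (2 / \<alpha>\<^sup>2) powr (1 / (\<alpha> - 1)) * ((\<alpha> - 1) / \<alpha>)"

definition K2 :: "real \<Rightarrow> real \<Rightarrow> (real \<Rightarrow> real) \<Rightarrow> (real \<Rightarrow> real) \<Rightarrow> ennreal" where
  "K2 k \<alpha> U \<Lambda> = ennreal (c_tilde \<alpha> / k powr (1 / (\<alpha> - 1))) *
     (\<integral>\<^sup>+ y. ennreal (\<bar>\<alpha> * \<Lambda> y / U y\<bar> powr (\<alpha> / (\<alpha> - 1))) \<partial>lborel)"

end

theory Submission
  imports Defs
begin

lemma gam_lower_aux:
  fixes a b \<alpha> :: real
  assumes "b > 0" "a \<ge> b" "\<alpha> \<ge> 2"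
  shows "(a - b) powr \<alpha> \<le> (a powr \<alpha> - b powr \<alpha>) * (ln a - ln b)"
proof -
  have a0: "a > 0" using assms by linarith
  have h1: "b powr \<alpha> \<le> b * a powr (\<alpha> - 1)"
  proof -
    have "b powr \<alpha> = b * b powr (\<alpha> - 1)" using assms by (simp add: powr_mult_base)
    also have "\<dots> \<le> b * a powr (\<alpha> - 1)" using assms by (intro mult_left_mono powr_mono2) auto
    finally show ?thesis .
  qed
  have h1': "a powr \<alpha> = a * a powr (\<alpha> - 1)" using a0 by (simp add: powr_mult_base)
  have h2: "a powr \<alpha> - b powr \<alpha> \<ge> a powr (\<alpha> - 1) * (a - b)" using h1 h1' by (simp add: algebra_simps)
  have h3: "ln a - ln b \<ge> (a - b) / a"
  proof -
    have "ln (b / a) \<le> b / a - 1" using assms a0 by (intro ln_le_minus_one) auto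
    moreover have "ln (b/a) = ln b - ln a" using assms a0 by (simp add: ln_div)
    moreover have "b / a - 1 = - ((a - b) / a)" using a0 by (simp add: field_simps)
    ultimately show ?thesis by linarith
  qed
  have "(a powr \<alpha> - b powr \<alpha>) * (ln a - ln b) \<ge> (a powr (\<alpha> - 1) * (a - b)) * ((a - b) / a)"
    using h2 h3 assms a0 powr_mono2[of \<alpha> b a] by (intro mult_mono) auto
  also have "(a powr (\<alpha> - 1) * (a - b)) * ((a - b) / a) = a powr (\<alpha> - 2) * (a - b)^2"
  proof -
    have "a powr (\<alpha> - 1) = a * a powr (\<alpha> - 2)" using a0 by (simp add: powr_mult_base)
    then show ?thesis using a0 by (simp add: power2_eq_square field_simps)
  qed
  finally have A: "a powr (\<alpha> - 2) * (a - b)^2 \<le> (a powr \<alpha> - b powr \<alpha>) * (ln a - ln b)" .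
  show ?thesis
  proof (cases "a = b")
    case True then show ?thesis using assms by simp
  next
    case False
    then have ab: "a - b > 0" using assms by simp
    have "(a - b) powr \<alpha> = (a - b) powr (\<alpha> - 2) * (a - b)^2"
    proof -
      have "(a - b) powr \<alpha> = (a - b) powr ((\<alpha> - 2) + 2)" by simp
      also have "\<dots> = (a - b) powr (\<alpha> - 2) * (a - b) powr 2" by (rule powr_add)
      also have "(a - b) powr 2 = (a - b)^2" using ab by (simp add: powr_numeral)
      finally show ?thesis .
    qed
    also have "\<dots> \<le> a powr (\<alpha> - 2) * (a - b)^2"
      using assms ab by (intro mult_right_mono powr_mono2) auto
    finally show ?thesis using A by linarith
  qed
qed

lemma gam_lower:
  fixes a b \<alpha> :: real
  assumes "b > 0" "a > 0" "\<alpha> \<ge> 2"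
  shows "\<bar>a - b\<bar> powr \<alpha> \<le> (a powr \<alpha> - b powr \<alpha>) * (ln a - ln b)"
proof (cases "a \<ge> b")
  case True then show ?thesis using gam_lower_aux[of b a \<alpha>] assms by simp
next
  case False
  then have "(b - a) powr \<alpha> \<le> (b powr \<alpha> - a powr \<alpha>) * (ln b - ln a)"
    using gam_lower_aux[of a b \<alpha>] assms by simp
  then show ?thesis using False by (simp add: algebra_simps)
qed

lemma young_core:
  fixes t A M \<alpha> :: real
  assumes "t \<ge> 0" "A \<ge> 0" "M > 0" "\<alpha> \<ge> 2"
  shows "t * A \<le> \<alpha> * M * t powr \<alpha> + ((\<alpha> - 1) / \<alpha>) * (\<alpha>^2 * M) powr (-1/(\<alpha>-1)) * A powr (\<alpha>/(\<alpha>-1))"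
proof -
  define s where "s = (\<alpha>^2 * M) powr (1/\<alpha>)"
  have s0: "s > 0" using assms by (simp add: s_def)
  have sa: "s powr \<alpha> = \<alpha>^2 * M" using assms by (simp add: s_def powr_powr)
  have sq: "s powr (-(\<alpha>/(\<alpha>-1))) = (\<alpha>^2 * M) powr (-1/(\<alpha>-1))"
    using assms by (simp add: s_def powr_powr)
  have q1: "\<alpha>/(\<alpha>-1) > 1" using assms by (simp add: field_simps)
  have pq: "1/\<alpha> + 1/(\<alpha>/(\<alpha>-1)) = 1" using assms by (simp add: field_simps)
  have "(t * s) * (A / s) \<le> (t * s) powr \<alpha> / \<alpha> + (A / s) powr (\<alpha>/(\<alpha>-1)) / (\<alpha>/(\<alpha>-1))"
    using assms s0 q1 pq by (intro Youngs_inequality) auto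
  also have "(t * s) powr \<alpha> / \<alpha> = \<alpha> * M * t powr \<alpha>"
    using assms s0 by (simp add: powr_mult sa power2_eq_square)
  also have "(A / s) powr (\<alpha>/(\<alpha>-1)) / (\<alpha>/(\<alpha>-1)) = ((\<alpha> - 1) / \<alpha>) * (\<alpha>^2 * M) powr (-1/(\<alpha>-1)) * A powr (\<alpha>/(\<alpha>-1))"
  proof -
    have sq2: "s powr (\<alpha>/(\<alpha>-1)) = (\<alpha>^2 * M) powr (1/(\<alpha>-1))"
      using assms by (simp add: s_def powr_powr)
    show ?thesis using assms s0 by (simp add: powr_divide sq2 powr_minus_divide mult_ac)
  qed
  finally show ?thesis using s0 by simp
qed

lemma pointwise:
  fixes \<alpha> r z u L k \<tau> :: real
  assumes "\<alpha> \<ge> 2" "r > 0" "z > 0" "u > 0" "k > 0"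
  shows "((1 - r) * \<alpha> - (1 - z) * \<alpha>) * L \<le>
    exp \<tau> * (k * u powr \<alpha> * ((r powr \<alpha> - z powr \<alpha>) * (ln (r powr \<alpha>) - ln (z powr \<alpha>))))
    + (c_tilde \<alpha> / k powr (1 / (\<alpha> - 1))) * exp (- \<tau> / (\<alpha> - 1)) * \<bar>\<alpha> * L / u\<bar> powr (\<alpha> / (\<alpha> - 1))"
proof -
  define M where "M = exp \<tau> * k * u powr \<alpha>"
  define t where "t = \<bar>r - z\<bar>"
  define A where "A = \<bar>\<alpha> * L\<bar>"
  define q where "q = \<alpha> / (\<alpha> - 1)"
  define e where "e = 1 / (\<alpha> - 1)"
  have M0: "M > 0" using assms by (simp add: M_def)
  have a1: "\<alpha> - 1 > 0" using assms by simp
  have "((1 - r) * \<alpha> - (1 - z) * \<alpha>) * L = (z - r) * (\<alpha> * L)" by (simp add: algebra_simps)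
  also have "\<dots> \<le> t * A" unfolding t_def A_def
    by (metis abs_ge_self abs_minus_commute abs_mult)
  also have "\<dots> \<le> \<alpha> * M * t powr \<alpha> + ((\<alpha> - 1) / \<alpha>) * (\<alpha>^2 * M) powr (-1/(\<alpha>-1)) * A powr (\<alpha>/(\<alpha>-1))"
    using assms M0 by (intro young_core) (auto simp: t_def A_def)
  also have "\<alpha> * M * t powr \<alpha> \<le> M * (\<alpha> * ((r powr \<alpha> - z powr \<alpha>) * (ln r - ln z)))"
  proof -
    have "t powr \<alpha> \<le> (r powr \<alpha> - z powr \<alpha>) * (ln r - ln z)"
      unfolding t_def using gam_lower[of z r \<alpha>] assms by simp
    then show ?thesis using M0 assms by (simp add: mult_left_mono)
  qed
  also have "M * (\<alpha> * ((r powr \<alpha> - z powr \<alpha>) * (ln r - ln z))) =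
    exp \<tau> * (k * u powr \<alpha> * ((r powr \<alpha> - z powr \<alpha>) * (ln (r powr \<alpha>) - ln (z powr \<alpha>))))"
    using assms by (simp add: M_def algebra_simps)
  also have "((\<alpha> - 1) / \<alpha>) * (\<alpha>^2 * M) powr (-1/(\<alpha>-1)) * A powr (\<alpha>/(\<alpha>-1)) \<le>
     (c_tilde \<alpha> / k powr (1 / (\<alpha> - 1))) * exp (- \<tau> / (\<alpha> - 1)) * \<bar>\<alpha> * L / u\<bar> powr (\<alpha> / (\<alpha> - 1))"
  proof -
    have e1: "(\<alpha>^2 * M) powr (-1/(\<alpha>-1)) = (1 / \<alpha>^2) powr e * M powr (- e)"
    proof -
      have "(\<alpha>^2 * M) powr (-1/(\<alpha>-1)) = (\<alpha>^2) powr (- e) * M powr (- e)"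
        by (simp add: powr_mult e_def)
      moreover have "(\<alpha>^2) powr (- e) = (1 / \<alpha>^2) powr e"
        by (simp add: powr_minus_divide powr_divide)
      ultimately show ?thesis by simp
    qed
    have e2: "(1 / \<alpha>^2) powr e \<le> (2 / \<alpha>^2) powr e"
      using assms a1 by (intro powr_mono2) (auto simp: e_def divide_simps)
    have e3: "M powr (- e) = exp (- \<tau> / (\<alpha> - 1)) * k powr (- e) * (u powr q) powr (-1)"
      using assms by (simp add: M_def powr_mult exp_powr_real powr_powr e_def q_def powr_minus_divide exp_minus field_simps)
    have e4: "\<bar>\<alpha> * L / u\<bar> powr q = A powr q * (u powr q) powr (-1)"
      using assms by (simp add: A_def abs_divide powr_divide powr_minus_divide)
    have "((\<alpha> - 1) / \<alpha>) * (\<alpha>^2 * M) powr (-1/(\<alpha>-1)) * A powr (\<alpha>/(\<alpha>-1))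
       = ((\<alpha> - 1) / \<alpha>) * (1 / \<alpha>^2) powr e * (exp (- \<tau> / (\<alpha> - 1)) * k powr (- e) * (A powr q * (u powr q) powr (-1)))"
      unfolding e1 e3 q_def by (simp add: mult_ac)
    also have "\<dots> \<le> ((\<alpha> - 1) / \<alpha>) * (2 / \<alpha>^2) powr e * (exp (- \<tau> / (\<alpha> - 1)) * k powr (- e) * (A powr q * (u powr q) powr (-1)))"
      using e2 a1 assms by (intro mult_right_mono mult_left_mono) auto
    also have "\<dots> = (c_tilde \<alpha> / k powr (1 / (\<alpha> - 1))) * exp (- \<tau> / (\<alpha> - 1)) * \<bar>\<alpha> * L / u\<bar> powr q"
      unfolding e4 c_tilde_def e_def
      by (simp add: powr_minus_divide mult_ac)
    finally show ?thesis unfolding q_def .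
  qed
  finally show ?thesis by simp
qed

lemma ereal_final:
  fixes X e Kc E :: real and a b :: ennreal
  assumes "e > 0" "Kc \<ge> 0" "E > 0"
    and "ereal X \<le> ereal e * enn2ereal a + ereal (Kc * E) * enn2ereal b"
  shows "ereal X - ereal e * enn2ereal a \<le> enn2ereal (ennreal Kc * b) * ereal E"
proof (cases "a = top")
  case True
  then show ?thesis using assms by simp
next
  case False
  then obtain r where r: "a = ennreal r" "r \<ge> 0" by (cases a) auto
  show ?thesis
  proof (cases "b = top")
    case True
    then show ?thesis using assms r by (cases "Kc = 0") (auto simp: ennreal_mult_top zero_ennreal.rep_eq)
  next
    case False
    then obtain s where s: "b = ennreal s" "s \<ge> 0" by (cases b) auto
    have "X \<le> e * r + Kc * E * s" using assms(4) r s by simp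
    then show ?thesis using assms r s by (simp add: ennreal_mult[symmetric] algebra_simps)
  qed
qed

lemma C2_facts:
  assumes "C2 f"
  shows "continuous_on UNIV f" "continuous_on UNIV (deriv f)" "continuous_on UNIV (deriv (deriv f))"
proof -
  obtain f' f'' where h: "\<forall>y. (f has_real_derivative f' y) (at y)"
      "\<forall>y. (f' has_real_derivative f'' y) (at y)" "continuous_on UNIV f''"
    using assms unfolding C2_def by blast
  have d1: "deriv f = f'" using h(1) DERIV_imp_deriv by blast
  have d2: "deriv f' = f''" using h(2) DERIV_imp_deriv by blast
  show "continuous_on UNIV f"
    using h(1) by (intro continuous_at_imp_continuous_on) (auto intro: DERIV_isCont)
  show "continuous_on UNIV (deriv f)" unfolding d1
    using h(2) by (intro continuous_at_imp_continuous_on) (auto intro: DERIV_isCont)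
  show "continuous_on UNIV (deriv (deriv f))" unfolding d1 d2 by (rule h(3))
qed

theorem mainTheorem9:
  fixes d1 d2 k \<alpha> \<beta> Am Ap \<tau> :: real
    and U V \<Lambda> \<rho> \<zeta> :: "real \<Rightarrow> real"
  assumes "d1 > 0" "d2 > 0" "k > 0" "Am > 0" "Ap > 0"
    and "\<alpha> = \<beta>" "\<alpha> \<ge> 2"
    and "similarity_profile d1 d2 \<alpha> \<beta> Am Ap U V \<Lambda>"
    and "\<tau> \<ge> 0"
    and "\<rho> \<in> borel_measurable lborel" "\<zeta> \<in> borel_measurable lborel"
    and "\<forall>y. \<rho> y > 0" "\<forall>y. \<zeta> y > 0"
    and "integrable lborel (I_Lambda_integrand \<alpha> \<beta> \<Lambda> \<rho> \<zeta>)"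
  shows "ereal (I_Lambda \<alpha> \<beta> \<Lambda> \<rho> \<zeta>) - ereal (exp \<tau>) * enn2ereal (D_react k \<alpha> \<beta> U \<rho> \<zeta>)
           \<le> enn2ereal (K2 k \<alpha> U \<Lambda>) * ereal (exp (- \<tau> / (\<alpha> - 1)))"
proof -
  note sp = assms(8)[unfolded similarity_profile_def]
  have Upos: "\<And>y. U y > 0" using sp by blast
  have C2U: "C2 U" using sp by blast
  have ode: "\<And>y. d1 * deriv (deriv U) y + y / 2 * deriv U y + \<alpha> * \<Lambda> y = 0" using sp by blast
  have a0: "\<alpha> \<noteq> 0" using assms by simp
  have Lam: "\<Lambda> = (\<lambda>y. - (d1 * deriv (deriv U) y + y / 2 * deriv U y) / \<alpha>)"
  proof
    fix y show "\<Lambda> y = - (d1 * deriv (deriv U) y + y / 2 * deriv U y) / \<alpha>"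
      using ode[of y] a0 by (simp add: field_simps)
  qed
  have mU: "U \<in> borel_measurable borel"
    using C2_facts(1)[OF C2U] by (rule borel_measurable_continuous_onI)
  have mU1: "deriv U \<in> borel_measurable borel"
    using C2_facts(2)[OF C2U] by (rule borel_measurable_continuous_onI)
  have mU2: "deriv (deriv U) \<in> borel_measurable borel"
    using C2_facts(3)[OF C2U] by (rule borel_measurable_continuous_onI)
  have mL: "\<Lambda> \<in> borel_measurable borel" unfolding Lam using mU1 mU2 by measurable
  have mr: "\<rho> \<in> borel_measurable borel" "\<zeta> \<in> borel_measurable borel" using assms(10,11) by auto
  define f where "f = I_Lambda_integrand \<alpha> \<beta> \<Lambda> \<rho> \<zeta>"
  define G where "G y = k * U y powr \<alpha> * ((\<rho> y powr \<alpha> - \<zeta> y powr \<alpha>) * (ln (\<rho> y powr \<alpha>) - ln (\<zeta> y powr \<alpha>)))" for y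
  define H where "H y = \<bar>\<alpha> * \<Lambda> y / U y\<bar> powr (\<alpha> / (\<alpha> - 1))" for y
  define Kc where "Kc = c_tilde \<alpha> / k powr (1 / (\<alpha> - 1))"
  define E where "E = exp (- \<tau> / (\<alpha> - 1))"
  have mG: "G \<in> borel_measurable borel" unfolding G_def using mU mr by measurable
  have mH: "H \<in> borel_measurable borel" unfolding H_def using mU mL by measurable
  have G0: "G y \<ge> 0" for y
  proof -
    have "0 \<le> \<bar>\<rho> y - \<zeta> y\<bar> powr \<alpha>" by simp
    also have "\<dots> \<le> (\<rho> y powr \<alpha> - \<zeta> y powr \<alpha>) * (ln (\<rho> y) - ln (\<zeta> y))"
      using gam_lower[of "\<zeta> y" "\<rho> y" \<alpha>] assms by auto
    finally have "0 \<le> \<alpha> * ((\<rho> y powr \<alpha> - \<zeta> y powr \<alpha>) * (ln (\<rho> y) - ln (\<zeta> y)))"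
      using assms by simp
    moreover have "G y = (k * U y powr \<alpha>) * (\<alpha> * ((\<rho> y powr \<alpha> - \<zeta> y powr \<alpha>) * (ln (\<rho> y) - ln (\<zeta> y))))"
      using assms Upos[of y] unfolding G_def by (simp add: algebra_simps)
    ultimately show ?thesis using assms Upos[of y] by simp
  qed
  have Kc0: "Kc \<ge> 0" using assms by (simp add: Kc_def c_tilde_def)
  have D: "D_react k \<alpha> \<beta> U \<rho> \<zeta> = (\<integral>\<^sup>+ y. ennreal (G y) \<partial>lborel)"
    unfolding D_react_def
  proof (intro nn_integral_cong)
    fix y
    have gp: "(\<rho> y powr \<alpha> - \<zeta> y powr \<alpha>) * (ln (\<rho> y powr \<alpha>) - ln (\<zeta> y powr \<alpha>)) \<ge> 0"
      using G0[of y] Upos[of y] assms(3) unfolding G_def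
      by (smt (verit) mult_pos_pos powr_gt_zero zero_le_mult_iff)
    have ry: "\<rho> y > 0" "\<zeta> y > 0" using assms(12,13) by blast+
    have g: "Gam (\<rho> y powr \<alpha>) (\<zeta> y powr \<beta>) = ennreal ((\<rho> y powr \<alpha> - \<zeta> y powr \<alpha>) * (ln (\<rho> y powr \<alpha>) - ln (\<zeta> y powr \<alpha>)))"
      unfolding Gam_def assms(6)[symmetric] using ry by simp
    have kU: "k * U y powr \<alpha> \<ge> 0" using assms(3) Upos[of y] by simp
    show "ennreal (k * U y powr \<alpha>) * Gam (\<rho> y powr \<alpha>) (\<zeta> y powr \<beta>) = ennreal (G y)"
      unfolding g G_def using gp kU by (simp add: ennreal_mult[symmetric] mult.assoc)
  qed
  have K: "K2 k \<alpha> U \<Lambda> = ennreal Kc * (\<integral>\<^sup>+ y. ennreal (H y) \<partial>lborel)"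
    unfolding K2_def Kc_def H_def ..
  have pw: "f y \<le> exp \<tau> * G y + Kc * E * H y" for y
    unfolding f_def I_Lambda_integrand_def G_def Kc_def E_def H_def assms(6)[symmetric]
    using pointwise[of \<alpha> "\<rho> y" "\<zeta> y" "U y" k "\<Lambda> y" \<tau>] assms Upos[of y] by auto
  have intf: "integrable lborel f" using assms(14) by (simp add: f_def)
  have "ereal (integral\<^sup>L lborel f) \<le> ereal (integral\<^sup>L lborel (\<lambda>y. max (f y) 0))"
    using intf by (simp add: integral_mono)
  also have "\<dots> = enn2ereal (\<integral>\<^sup>+ y. ennreal (max (f y) 0) \<partial>lborel)"
    using intf by (subst nn_integral_eq_integral) auto
  also have "\<dots> = enn2ereal (\<integral>\<^sup>+ y. ennreal (f y) \<partial>lborel)"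
    by (simp add: ennreal_max_0[unfolded max.commute[of 0]])
  also have "\<dots> \<le> enn2ereal (\<integral>\<^sup>+ y. ennreal (exp \<tau>) * ennreal (G y) + ennreal (Kc * E) * ennreal (H y) \<partial>lborel)"
  proof -
    have "(\<integral>\<^sup>+ y. ennreal (f y) \<partial>lborel) \<le> (\<integral>\<^sup>+ y. ennreal (exp \<tau>) * ennreal (G y) + ennreal (Kc * E) * ennreal (H y) \<partial>lborel)"
    proof (intro nn_integral_mono)
      fix y
      have "ennreal (f y) \<le> ennreal (exp \<tau> * G y + Kc * E * H y)" using pw by (rule ennreal_leI)
      also have "\<dots> = ennreal (exp \<tau>) * ennreal (G y) + ennreal (Kc * E) * ennreal (H y)"
        using G0[of y] Kc0 by (simp add: ennreal_plus ennreal_mult E_def H_def)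
      finally show "ennreal (f y) \<le> \<dots>" .
    qed
    then show ?thesis by (simp add: less_eq_ennreal.rep_eq)
  qed
  also have "(\<integral>\<^sup>+ y. ennreal (exp \<tau>) * ennreal (G y) + ennreal (Kc * E) * ennreal (H y) \<partial>lborel)
      = ennreal (exp \<tau>) * (\<integral>\<^sup>+ y. ennreal (G y) \<partial>lborel) + ennreal (Kc * E) * (\<integral>\<^sup>+ y. ennreal (H y) \<partial>lborel)"
    using mG mH by (simp add: nn_integral_add nn_integral_cmult)
  finally have main: "ereal (integral\<^sup>L lborel f) \<le> ereal (exp \<tau>) * enn2ereal (\<integral>\<^sup>+ y. ennreal (G y) \<partial>lborel)
     + ereal (Kc * E) * enn2ereal (\<integral>\<^sup>+ y. ennreal (H y) \<partial>lborel)"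
    using Kc0 by (simp add: plus_ennreal.rep_eq times_ennreal.rep_eq E_def)
  show ?thesis
    unfolding I_Lambda_def D K f_def[symmetric] E_def[symmetric]
    using ereal_final[OF _ Kc0 _ main] by (simp add: E_def)
qed

end
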